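(* Let $\mathfrak S$ be a controlled Markov process and $\mathcal G$ its induced abstract $2\frac12$-player game graph (as described in the context). Let $U\subseteq V_0$, let $v\in U$, and let $\pi_0$ be a deterministic memoryless strategy of Player 0 such that $\inf_{\pi_1}P_v^{\pi_0,\pi_1}(\mathcal G\models\square U)=1$, where the infimum ranges over all strategies $\pi_1$ of Player 1. Then the refinement $\rho$ of $\pi_0$ ensures $P_s^{\rho}(\mathfrak S\models\square Q^{-1}(U))=1$ for every state $s\in v$.
   Context: CMP: $\mathfrak S=(\mathcal S,\mathcal U,T_{\mathfrak s})$ with $\mathcal S$ a Borel space, $\mathcal U$ finite, and $T_{\mathfrak s}(\cdot\mid s,u)$ a probability measure on the Borel sets of $\mathcal S$. A stationary policy is a universally measurable $\rho:\mathcal S\to\mathcal U$; $P_s^\rho$ is the induced measure on infinite paths from $s$ with $s^{k+1}\sim T_{\mathfrak s}(\cdot\mid s^k,\rho(s^k))$. $\mathcal P=\langle B_1,\dots,B_\ell\rangle$ is a given partition of $\mathcal S$ into measurable sets. Abstraction: $\widehat{\mathcal S}$ is a finite partition of $\mathcal S$ into nonempty (measurable) cells each contained in a single $B_i$. $Q:\mathcal S\to\widehat{\mathcal S}$ maps $s$ to its cell; $Q^{-1}(\widehat U)=\bigcup_{\widehat s\in\widehat U}\widehat s$. Functions $\overline F,\underline F:\widehat{\mathcal S}\times\mathcal U\to2^{\widehat{\mathcal S}}$ satisfy $\overline F(\widehat s,u)\supseteq\{\widehat s'\mid\exists s\in\widehat s.\ T_{\mathfrak s}(\widehat s'\mid s,u)>0\}$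 and $\underline F(\widehat s,u)\subseteq\{\widehat s'\mid\exists\varepsilon>0\ \forall s\in\widehat s.\ T_{\mathfrak s}(\widehat s'\mid s,u)\ge\varepsilon\}$. Game graph $\mathcal G=\langle V,E,\langle V_0,V_1,V_r\rangle\rangle$: $V_0=\widehat{\mathcal S}$, $V_1=\widehat{\mathcal S}\times\mathcal U$, $V_r=\bigcup_{v_1\in V_1}V_r(v_1)$ with $V_r(v_1)=\{v_r\subseteq\widehat{\mathcal S}\mid\underline F(v_1)\subseteq v_r\subseteq\overline F(v_1),\ 1\le|v_r|\le|\underline F(v_1)|+1\}$; $E(v_0)=\{(v_0,u)\mid u\in\mathcal U\}$, $E(v_1)=V_r(v_1)$, $E(v_r)=\{v_0\in V_0\mid v_0\in v_r\}$. Player 0 moves at $V_0$, Player 1 at $V_1$, and at $V_r$ the successor is uniformly random. Strategies $\pi_i:V^*V_i\to\mathit{Dist}(V)$ are supported on successors; a deterministic memoryless Player 0 strategy assigns each $v_0$ a single successor $\pi_0(v_0)=(v_0,u)$. $P_v^{\pi_0,\pi_1}$ is the induced measure on runs. A run of $\mathcal G$ satisfies a specification over $V_0$ (such as $\square U$: always in $U$) iff its projection onto its subsequence of $V_0$-vertices does. Refinement: the refinement of a deterministic memoryless $\pi_0$ is $\rho$ with $\rho(s)=u$ whenever $s\in\widehat s$ and $\pi_0(\widehat s)=(\widehat s,u)$. *)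

theory Defs
  imports "HOL-Probability.Probability"
begin

text \<open>Finite-dimensional distributions of the path measure P_s^rho:
  probability that s^0 in A 0, ..., s^n in A n, where s^0 = s and
  s^(k+1) ~ T(. | s^k, rho(s^k)).\<close>
primrec cmp_fdd :: "('s \<Rightarrow> 'u \<Rightarrow> 's measure) \<Rightarrow> ('s \<Rightarrow> 'u) \<Rightarrow> 's \<Rightarrow> nat \<Rightarrow> (nat \<Rightarrow> 's set) \<Rightarrow> ennreal"
where
  "cmp_fdd T \<rho> s 0 A = indicator (A 0) s"
| "cmp_fdd T \<rho> s (Suc n) A =
     indicator (A 0) s * (\<integral>\<^sup>+ t. cmp_fdd T \<rho> t n (\<lambda>i. A (Suc i)) \<partial>(T s (\<rho> s)))"

definition cmp_path_measure ::
  "'s measure \<Rightarrow> ('s \<Rightarrow> 'u \<Rightarrow> 's measure) \<Rightarrow> ('s \<Rightarrow> 'u) \<Rightarrow> 's \<Rightarrow> 's stream measure \<Rightarrow> bool"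
where
  "cmp_path_measure M T \<rho> s P \<longleftrightarrow>
     prob_space P \<and> sets P = sets (stream_space M) \<and>
     (\<forall>n A. (\<forall>i\<le>n. A i \<in> sets M) \<longrightarrow>
        emeasure P {\<omega> \<in> space P. \<forall>i\<le>n. \<omega> !! i \<in> A i} = cmp_fdd T \<rho> s n A)"

definition cell_of :: "'s set set \<Rightarrow> 's \<Rightarrow> 's set"
  where "cell_of cells s = (THE c. c \<in> cells \<and> s \<in> c)"

text \<open>Refinement of a deterministic memoryless Player 0 strategy, given as the
  map sigma from cells to actions (pi_0(c) = (c, sigma c)).\<close>
definition refinement :: "'s set set \<Rightarrow> ('s set \<Rightarrow> 'u) \<Rightarrow> 's \<Rightarrow> 'u"
  where "refinement cells \<sigma> s = \<sigma> (cell_of cells s)"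

datatype ('c, 'u) gvertex = GV0 'c | GV1 'c 'u | GVr "'c set"

definition Vr_of :: "'c set \<Rightarrow> 'c set \<Rightarrow> 'c set set" where
  "Vr_of Flow Fup = {r. Flow \<subseteq> r \<and> r \<subseteq> Fup \<and> 1 \<le> card r \<and> card r \<le> card Flow + 1}"

definition game_vertices ::
  "'c set \<Rightarrow> ('c \<Rightarrow> 'u \<Rightarrow> 'c set) \<Rightarrow> ('c \<Rightarrow> 'u \<Rightarrow> 'c set) \<Rightarrow> ('c, 'u) gvertex set" where
  "game_vertices cells Flow Fup =
     GV0 ` cells \<union> {GV1 c u | c u. c \<in> cells} \<union>
     GVr ` (\<Union>c\<in>cells. \<Union>u. Vr_of (Flow c u) (Fup c u))"

fun game_succ ::
  "('c \<Rightarrow> 'u \<Rightarrow> 'c set) \<Rightarrow> ('c \<Rightarrow> 'u \<Rightarrow> 'c set) \<Rightarrow> ('c, 'u) gvertex \<Rightarrow> ('c, 'u) gvertex set" where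
  "game_succ Flow Fup (GV0 c) = {GV1 c u | u. True}"
| "game_succ Flow Fup (GV1 c u) = GVr ` Vr_of (Flow c u) (Fup c u)"
| "game_succ Flow Fup (GVr r) = GV0 ` r"

definition is_GV1 :: "('c, 'u) gvertex \<Rightarrow> bool" where
  "is_GV1 v \<longleftrightarrow> (\<exists>c u. v = GV1 c u)"

definition player1_strategies ::
  "'c set \<Rightarrow> ('c \<Rightarrow> 'u \<Rightarrow> 'c set) \<Rightarrow> ('c \<Rightarrow> 'u \<Rightarrow> 'c set)
   \<Rightarrow> (('c, 'u) gvertex list \<Rightarrow> ('c, 'u) gvertex pmf) set" where
  "player1_strategies cells Flow Fup =
     {\<pi>1. \<forall>h. h \<noteq> [] \<and> set h \<subseteq> game_vertices cells Flow Fup \<and> is_GV1 (last h) \<longrightarrow>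
            set_pmf (\<pi>1 h) \<subseteq> game_succ Flow Fup (last h)}"

definition game_trans ::
  "('c \<Rightarrow> 'u) \<Rightarrow> (('c, 'u) gvertex list \<Rightarrow> ('c, 'u) gvertex pmf)
   \<Rightarrow> ('c, 'u) gvertex list \<Rightarrow> ('c, 'u) gvertex pmf" where
  "game_trans \<sigma> \<pi>1 h = (case last h of
       GV0 c \<Rightarrow> return_pmf (GV1 c (\<sigma> c))
     | GV1 c u \<Rightarrow> \<pi>1 h
     | GVr r \<Rightarrow> pmf_of_set (GV0 ` r))"

definition is_game_measure ::
  "('c \<Rightarrow> 'u) \<Rightarrow> (('c, 'u) gvertex list \<Rightarrow> ('c, 'u) gvertex pmf) \<Rightarrow> ('c, 'u) gvertex
   \<Rightarrow> ('c, 'u) gvertex stream measure \<Rightarrow> bool" where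
  "is_game_measure \<sigma> \<pi>1 v P \<longleftrightarrow>
     prob_space P \<and> sets P = sets (stream_space (count_space UNIV)) \<and>
     (\<forall>w. emeasure P {\<omega> \<in> space P. stake (Suc (length w)) \<omega> = v # w} =
           ennreal (\<Prod>i<length w. pmf (game_trans \<sigma> \<pi>1 (take (Suc i) (v # w))) (w ! i)))"

definition game_measure ::
  "('c \<Rightarrow> 'u) \<Rightarrow> (('c, 'u) gvertex list \<Rightarrow> ('c, 'u) gvertex pmf) \<Rightarrow> ('c, 'u) gvertex
   \<Rightarrow> ('c, 'u) gvertex stream measure" where
  "game_measure \<sigma> \<pi>1 v = (SOME P. is_game_measure \<sigma> \<pi>1 v P)"

definition game_always :: "'c set \<Rightarrow> ('c, 'u) gvertex stream set" where
  "game_always U = {\<omega>. \<forall>i. case \<omega> !! i of GV0 c \<Rightarrow> c \<in> U | _ \<Rightarrow> True}"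

end

theory Submission imports Defs begin


lemma cmp_fdd_const:
  assumes cl: "\<And>t. t \<in> W \<Longrightarrow> emeasure (T t (\<rho> t)) W = 1 \<and> W \<in> sets (T t (\<rho> t))"
  shows "cmp_fdd T \<rho> t n (\<lambda>_. W) = indicator W t"
proof (induction n arbitrary: t)
  case 0
  then show ?case by simp
next
  case (Suc n)
  show ?case
  proof (cases "t \<in> W")
    case True
    have "(\<integral>\<^sup>+ t'. cmp_fdd T \<rho> t' n (\<lambda>i. W) \<partial>(T t (\<rho> t))) = (\<integral>\<^sup>+ t'. indicator W t' \<partial>(T t (\<rho> t)))"
      using Suc by simp
    also have "\<dots> = 1" using cl[OF True] by simp
    finally show ?thesis using True by simp
  qed simp
qed

lemma cmp_always:
  assumes P: "cmp_path_measure M T \<rho> s P" and W: "W \<in> sets M" and s: "s \<in> W"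
    and cl: "\<And>t. t \<in> W \<Longrightarrow> emeasure (T t (\<rho> t)) W = 1 \<and> sets (T t (\<rho> t)) = sets M"
  shows "AE \<omega> in P. \<forall>i. \<omega> !! i \<in> W"
proof -
  interpret prob_space P using P unfolding cmp_path_measure_def by blast
  have sP: "sets P = sets (stream_space M)" using P unfolding cmp_path_measure_def by blast
  have meas: "Measurable.pred P (\<lambda>\<omega>. \<forall>i\<le>n. \<omega> !! i \<in> W)" for n
    unfolding measurable_cong_sets[OF sP refl]
    by (intro pred_intros_countable pred_intros_logic measurable_const) (auto intro!: pred_sets2[OF W] measurable_snth)
  have "AE \<omega> in P. \<forall>i\<le>n. \<omega> !! i \<in> W" for n
  proof -
    have "emeasure P {\<omega> \<in> space P. \<forall>i\<le>n. \<omega> !! i \<in> W} = cmp_fdd T \<rho> s n (\<lambda>_. W)"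
    proof -
      have "\<forall>n A. (\<forall>i\<le>n. A i \<in> sets M) \<longrightarrow>
        emeasure P {\<omega> \<in> space P. \<forall>i\<le>n. \<omega> !! i \<in> A i} = cmp_fdd T \<rho> s n A"
        using P unfolding cmp_path_measure_def by (elim conjE)
      from spec[OF spec[OF this, of n], of "\<lambda>_. W"] W show ?thesis by simp
    qed
    also have "\<dots> = 1"
    proof (subst cmp_fdd_const)
      fix t assume "t \<in> W"
      then show "emeasure (T t (\<rho> t)) W = 1 \<and> W \<in> sets (T t (\<rho> t))" using cl[of t] W by simp
    qed (use s in simp)
    finally show ?thesis using AE_iff_emeasure_eq_1[OF meas] by simp
  qed
  then have "AE \<omega> in P. \<forall>n. \<forall>i\<le>n. \<omega> !! i \<in> W" by (subst AE_all_countable) blast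
  then show ?thesis by (rule AE_mp) (auto intro!: AE_I2)
qed



fun prodK :: "('a \<Rightarrow> 'a pmf) \<Rightarrow> 'a \<Rightarrow> 'a list \<Rightarrow> real" where
  "prodK K x [] = 1"
| "prodK K x (a # w) = pmf (K x) a * prodK K a w"

lemma prodK_nonneg: "prodK K x w \<ge> 0"
  by (induction w arbitrary: x) auto

primcorec gwalk :: "('a \<Rightarrow> 'b \<Rightarrow> 'a) \<Rightarrow> 'a \<Rightarrow> 'b stream \<Rightarrow> 'a stream" where
  "gwalk f x X = x ## gwalk f (f x (shd X)) (stl X)"

lemma stake_eq_iff: "stake n s = l \<longleftrightarrow> length l = n \<and> (\<forall>i<n. s !! i = l ! i)"
  by (auto simp: list_eq_iff_nth_eq)

lemma sets_cyl: "{\<omega> \<in> space (stream_space (count_space UNIV)). stake n \<omega> = l} \<in> sets (stream_space (count_space UNIV))"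
proof -
  have "Measurable.pred (stream_space (count_space UNIV)) (\<lambda>\<omega>. length l = n \<and> (\<forall>i. i < n \<longrightarrow> \<omega> !! i = l ! i))"
    by (intro pred_intros_logic pred_intros_countable measurable_const)
       (auto intro!: pred_sets2[of "{l ! i}" for i] measurable_snth)
  then show ?thesis unfolding stake_eq_iff by simp
qed

lemma gwalk_meas:
  fixes J :: "'b pmf"
  assumes V: "finite V" and f: "\<And>x y. x \<in> V \<Longrightarrow> f x y \<in> V" and x: "x \<in> V"
  shows "(\<lambda>X. gwalk f x X !! n) \<in> measurable (stream_space (measure_pmf J)) (count_space UNIV)"
  using x
proof (induction n arbitrary: x)
  case 0
  then show ?case by simp
next
  case (Suc n)
  have eq: "(\<lambda>X. gwalk f x X !! Suc n) = (\<lambda>X. (\<lambda>a X. gwalk f a (stl X) !! n) (f x (shd X)) X)"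
    by simp
  show ?case unfolding eq
  proof (rule measurable_compose_countable'[where I = V and f="\<lambda>a X. gwalk f a (stl X) !! n" and g="\<lambda>X. f x (shd X)"])
    fix a assume "a \<in> V"
    then show "(\<lambda>X. gwalk f a (stl X) !! n) \<in> measurable (stream_space (measure_pmf J)) (count_space UNIV)"
      using Suc.IH by (intro measurable_compose[OF measurable_stl]) auto
  next
    show "(\<lambda>X. f x (shd X)) \<in> measurable (stream_space (measure_pmf J)) (count_space V)"
      by (rule measurable_compose[OF measurable_shd]) (use f Suc.prems in auto)
  qed (use V in \<open>auto intro: countable_finite\<close>)
qed

lemma gwalk_meas2:
  fixes J :: "'b pmf"
  assumes V: "finite V" and f: "\<And>x y. x \<in> V \<Longrightarrow> f x y \<in> V" and x: "x \<in> V"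
  shows "gwalk f x \<in> measurable (stream_space (measure_pmf J)) (stream_space (count_space UNIV))"
  by (rule measurable_stream_space2) (rule gwalk_meas[OF assms])

lemma cyl_prob:
  fixes K :: "'a \<Rightarrow> 'a pmf" and x0 :: 'a
  assumes V: "finite V" and KV: "\<And>x. x \<in> V \<Longrightarrow> set_pmf (K x) \<subseteq> V" and x: "x \<in> V"
  defines "J \<equiv> Pi_pmf V x0 K"
  defines "nxf \<equiv> (\<lambda>x (f::'a \<Rightarrow> 'a). if f x \<in> V then f x else x)"
  shows "emeasure (stream_space (measure_pmf J))
           {X \<in> space (stream_space (measure_pmf J)). stake (Suc (length w)) (gwalk nxf x X) = x # w}
         = ennreal (prodK K x w)"
  using x
proof (induction w arbitrary: x)
  case Nil
  interpret S: prob_space "stream_space (measure_pmf J)"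
    by (rule prob_space.prob_space_stream_space[OF prob_space_measure_pmf])
  have "{X \<in> space (stream_space (measure_pmf J)). stake (Suc (length [])) (gwalk nxf x X) = [x]}
        = space (stream_space (measure_pmf J))" by auto
  then show ?case by (simp add: S.emeasure_space_1)
next
  case (Cons a w)
  let ?S = "stream_space (measure_pmf J)"
  have nV: "nxf y f \<in> V" if "y \<in> V" for y f using that unfolding nxf_def by auto
  have meas: "gwalk nxf y \<in> measurable ?S (stream_space (count_space UNIV))" if "y \<in> V" for y
    by (rule gwalk_meas2[OF V nV that])
  have setE: "{X \<in> space ?S. stake (Suc (length w')) (gwalk nxf y X) = y # w'} \<in> sets ?S" if "y \<in> V" for y w'
  proof -
    have eq: "{X \<in> space ?S. stake (Suc (length w')) (gwalk nxf y X) = y # w'} =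
       gwalk nxf y -` {\<omega> \<in> space (stream_space (count_space UNIV)). stake (Suc (length w')) \<omega> = y # w'} \<inter> space ?S"
      by (auto simp: space_stream_space)
    show ?thesis unfolding eq by (rule measurable_sets[OF meas[OF that] sets_cyl])
  qed
  have sp: "space ?S = UNIV" by (simp add: space_stream_space)
  have "emeasure ?S {X \<in> space ?S. stake (Suc (length (a # w))) (gwalk nxf x X) = x # a # w}
     = (\<integral>\<^sup>+t. emeasure ?S {X \<in> space ?S. t ## X \<in> {X \<in> space ?S. stake (Suc (length (a # w))) (gwalk nxf x X) = x # a # w}} \<partial>measure_pmf J)"
    by (rule prob_space.emeasure_stream_space[OF prob_space_measure_pmf setE[OF Cons.prems]])
  also have "\<dots> = (\<integral>\<^sup>+t. indicator {t. nxf x t = a} t * emeasure ?S {X \<in> space ?S. stake (Suc (length w)) (gwalk nxf a X) = a # w} \<partial>measure_pmf J)"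
    by (intro nn_integral_cong) (auto simp: sp split: split_indicator)
  also have "\<dots> = ennreal (prodK K x (a # w))"
  proof (cases "a \<in> V")
    case True
    have AE: "AE t in measure_pmf J. (nxf x t = a) = (t x = a)"
    proof (rule AE_pmfI)
      fix t assume "t \<in> set_pmf J"
      then have "t x \<in> set_pmf (K x)" unfolding J_def using set_Pi_pmf_subset'[OF V, of x0 K] Cons.prems
        by (auto simp: PiE_dflt_def)
      then show "(nxf x t = a) = (t x = a)" using KV[OF Cons.prems] unfolding nxf_def by auto
    qed
    have "emeasure (measure_pmf J) {t. nxf x t = a} = emeasure (measure_pmf J) {t. t x = a}"
      by (rule emeasure_eq_AE) (use AE in auto)
    also have "\<dots> = emeasure (measure_pmf (map_pmf (\<lambda>f. f x) J)) {a}"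
      by (simp add: map_pmf_rep_eq emeasure_distr vimage_def)
    also have "map_pmf (\<lambda>f. f x) J = K x" unfolding J_def using Pi_pmf_component[OF V, of x x0 K] Cons.prems by simp
    finally have e: "emeasure (measure_pmf J) {t. nxf x t = a} = ennreal (pmf (K x) a)"
      by (simp add: emeasure_pmf_single)
    have "(\<integral>\<^sup>+t. indicator {t. nxf x t = a} t * emeasure ?S {X \<in> space ?S. stake (Suc (length w)) (gwalk nxf a X) = a # w} \<partial>measure_pmf J)
       = emeasure (measure_pmf J) {t. nxf x t = a} * ennreal (prodK K a w)"
      using Cons.IH[OF True] by (simp add: nn_integral_multc)
    then show ?thesis using e by (simp add: ennreal_mult prodK_nonneg)
  next
    case False
    have "{t. nxf x t = a} = {}" using nV[OF Cons.prems] False by blast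
    moreover have "pmf (K x) a = 0" using KV[OF Cons.prems] False by (auto simp: set_pmf_eq)
    ultimately show ?thesis by simp
  qed
  finally show ?case .
qed

lemma mc_exists:
  fixes K :: "'a \<Rightarrow> 'a pmf" and x0 :: 'a
  assumes V: "finite V" and KV: "\<And>x. x \<in> V \<Longrightarrow> set_pmf (K x) \<subseteq> V" and x: "x \<in> V"
  shows "\<exists>P. prob_space P \<and> sets P = sets (stream_space (count_space UNIV)) \<and>
     (\<forall>w. emeasure P {\<omega> \<in> space P. stake (Suc (length w)) \<omega> = x # w} = ennreal (prodK K x w))"
proof -
  define J where "J = Pi_pmf V x K"
  define nxf where "nxf = (\<lambda>x (f::'a \<Rightarrow> 'a). if f x \<in> V then f x else x)"
  let ?S = "stream_space (measure_pmf J)"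
  let ?N = "stream_space (count_space (UNIV::'a set))"
  interpret S: prob_space ?S
    by (rule prob_space.prob_space_stream_space[OF prob_space_measure_pmf])
  have nV: "nxf y f \<in> V" if "y \<in> V" for y f using that unfolding nxf_def by auto
  have meas: "gwalk nxf x \<in> measurable ?S ?N"
    by (rule gwalk_meas2[OF V nV x])
  define P where "P = distr ?S ?N (gwalk nxf x)"
  have "prob_space P" unfolding P_def by (rule S.prob_space_distr[OF meas])
  moreover have "sets P = sets ?N" unfolding P_def by simp
  moreover have "emeasure P {\<omega> \<in> space P. stake (Suc (length w)) \<omega> = x # w} = ennreal (prodK K x w)" for w
  proof -
    have "emeasure P {\<omega> \<in> space P. stake (Suc (length w)) \<omega> = x # w}
       = emeasure ?S (gwalk nxf x -` {\<omega> \<in> space ?N. stake (Suc (length w)) \<omega> = x # w} \<inter> space ?S)"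
    proof -
      have "space P = space ?N" unfolding P_def by simp
      then show ?thesis unfolding P_def by (simp only: emeasure_distr[OF meas sets_cyl])
    qed
    also have "gwalk nxf x -` {\<omega> \<in> space ?N. stake (Suc (length w)) \<omega> = x # w} \<inter> space ?S
       = {X \<in> space ?S. stake (Suc (length w)) (gwalk nxf x X) = x # w}"
      by (auto simp: space_stream_space)
    also have "emeasure ?S \<dots> = ennreal (prodK K x w)"
      unfolding J_def nxf_def by (rule cyl_prob[OF V KV x])
    finally show ?thesis .
  qed
  ultimately show ?thesis by blast
qed


fun posK :: "('a \<Rightarrow> 'a pmf) \<Rightarrow> 'a \<Rightarrow> 'a list \<Rightarrow> bool" where
  "posK K x [] = True"
| "posK K x (a # w) = (a \<in> set_pmf (K x) \<and> posK K a w)"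

lemma posK_append: "posK K x (w @ w') = (posK K x w \<and> posK K (last (x # w)) w')"
  by (induction w arbitrary: x) auto

lemma prodK_pos: "posK K x w \<Longrightarrow> prodK K x w > 0"
  by (induction w arbitrary: x) (auto simp: pmf_positive)

lemma prod_prodK:
  assumes G: "\<And>h. h \<noteq> [] \<Longrightarrow> G h = K (last h)"
  shows "(\<Prod>i<length w. pmf (G (take (Suc i) (x # w))) (w ! i)) = prodK K x w"
proof (induction w arbitrary: x)
  case Nil
  then show ?case by simp
next
  case (Cons a w)
  have "(\<Prod>i<length (a # w). pmf (G (take (Suc i) (x # a # w))) ((a # w) ! i))
     = pmf (G [x]) a * (\<Prod>i<length w. pmf (G (take (Suc (Suc i)) (x # a # w))) (w ! i))"
    unfolding length_Cons prod.lessThan_Suc_shift by simp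
  also have "(\<Prod>i<length w. pmf (G (take (Suc (Suc i)) (x # a # w))) (w ! i))
      = (\<Prod>i<length w. pmf (G (take (Suc i) (a # w))) (w ! i))"
  proof (rule prod.cong[OF refl])
    fix i
    have "G (take (Suc (Suc i)) (x # a # w)) = K (last (take (Suc (Suc i)) (x # a # w)))" by (rule G) simp
    also have "\<dots> = K (last (take (Suc i) (a # w)))" by simp
    also have "\<dots> = G (take (Suc i) (a # w))" by (rule G[symmetric]) simp
    finally show "pmf (G (take (Suc (Suc i)) (x # a # w))) (w ! i) = pmf (G (take (Suc i) (a # w))) (w ! i)" by simp
  qed
  also have "\<dots> = prodK K a w" by (rule Cons.IH)
  finally show ?case using G[of "[x]"] by simp
qed


theorem proposition1:
  fixes S :: "'s::polish_space set"
    and T :: "'s \<Rightarrow> 'u::finite \<Rightarrow> 's measure"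
    and Bs :: "'s set list"
    and cells :: "'s set set"
    and Flow Fup :: "'s set \<Rightarrow> 'u \<Rightarrow> 's set set"
    and \<sigma> :: "'s set \<Rightarrow> 'u"
    and U :: "'s set set"
    and v :: "'s set"
  assumes S_borel: "S \<in> sets borel"
    and kernel: "\<And>u. (\<lambda>x. T x u) \<in> restrict_space borel S \<rightarrow>\<^sub>M prob_algebra (restrict_space borel S)"
    and Bs_meas: "\<forall>B \<in> set Bs. B \<in> sets (restrict_space borel S) \<and> B \<noteq> {}"
    and Bs_cover: "\<Union>(set Bs) = S"
    and Bs_disj: "\<forall>i < length Bs. \<forall>j < length Bs. i \<noteq> j \<longrightarrow> Bs ! i \<inter> Bs ! j = {}"
    and cells_fin: "finite cells"
    and cells_cover: "\<Union>cells = S"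
    and cells_disj: "disjoint cells"
    and cells_ok: "\<forall>c \<in> cells. c \<noteq> {} \<and> c \<in> sets (restrict_space borel S) \<and> (\<exists>B \<in> set Bs. c \<subseteq> B)"
    and Fup: "\<forall>c \<in> cells. \<forall>u. Fup c u \<subseteq> cells \<and>
               {c' \<in> cells. \<exists>x \<in> c. measure (T x u) c' > 0} \<subseteq> Fup c u"
    and Flow: "\<forall>c \<in> cells. \<forall>u. Flow c u \<subseteq>
               {c' \<in> cells. \<exists>\<epsilon>::real > 0. \<forall>x \<in> c. measure (T x u) c' \<ge> \<epsilon>}"
    and U_sub: "U \<subseteq> cells"
    and v_in: "v \<in> U"
    and win: "(INF \<pi>1 \<in> player1_strategies cells Flow Fup.
                 emeasure (game_measure \<sigma> \<pi>1 (GV0 v)) (game_always U)) = 1"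
  shows "\<forall>s \<in> v. \<forall>P. cmp_path_measure (restrict_space borel S) T (refinement cells \<sigma>) s P \<longrightarrow>
           emeasure P {\<omega> \<in> space P. \<forall>i. \<omega> !! i \<in> \<Union>U} = 1"
proof -
  let ?M = "restrict_space borel S"
  have spM: "space ?M = S" by (simp add: space_restrict_space)
  have cells_sets: "\<And>c. c \<in> cells \<Longrightarrow> c \<in> sets ?M" using cells_ok by blast
  have Tprob: "prob_space (T x u) \<and> sets (T x u) = sets ?M" if "x \<in> S" for x u
    using measurable_space[OF kernel[of u], of x] spM that by (auto simp: space_prob_algebra)
  have L: "emeasure (T x u) (\<Union>X) = 1"
    if c: "c \<in> cells" and x: "x \<in> c" and FX: "Fup c u \<subseteq> X" and X: "X \<subseteq> cells" for c x u X
  proof -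
    have xS: "x \<in> S" using c x cells_cover by blast
    interpret N: prob_space "T x u" using Tprob[OF xS] by blast
    have sN: "sets (T x u) = sets ?M" using Tprob[OF xS] by blast
    have spN: "space (T x u) = S" using sets_eq_imp_space_eq[OF sN] spM by simp
    have cs: "c' \<in> sets (T x u)" if "c' \<in> cells" for c' using cells_sets[OF that] sN by simp
    have z: "measure (T x u) c' = 0" if "c' \<in> cells - X" for c'
    proof -
      have "\<not> measure (T x u) c' > 0" using that FX Fup c x by blast
      then show ?thesis using measure_nonneg[of "T x u" c'] by linarith
    qed
    have "measure (T x u) (\<Union>(cells - X)) \<le> (\<Sum>c'\<in>cells - X. measure (T x u) c')"
      by (rule measure_Union_le) (use cells_fin cs in auto)
    also have "\<dots> = 0" using z by simp
    finally have z2: "measure (T x u) (\<Union>(cells - X)) \<le> 0" .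
    have fX: "finite X" using finite_subset[OF X cells_fin] .
    have "1 = measure (T x u) (\<Union>cells)" using cells_cover spN N.prob_space by simp
    also have "\<Union>cells = \<Union>X \<union> \<Union>(cells - X)" using X by blast
    also have "measure (T x u) \<dots> \<le> measure (T x u) (\<Union>X) + measure (T x u) (\<Union>(cells - X))"
      by (rule measure_Un_le) (use cells_fin fX X cs in \<open>auto intro!: sets.finite_Union\<close>)
    finally have "measure (T x u) (\<Union>X) \<ge> 1" using z2 by linarith
    then have "N.prob (\<Union>X) = 1" using N.prob_le_1[of "\<Union>X"] by linarith
    then show "emeasure (T x u) (\<Union>X) = 1" by (simp add: N.emeasure_eq_measure)
  qed
  have FupS: "\<And>c u. c \<in> cells \<Longrightarrow> Fup c u \<subseteq> cells" using Fup by blast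
  have FlowFup: "Flow c u \<subseteq> Fup c u" if c: "c \<in> cells" for c u
  proof
    fix c' assume c': "c' \<in> Flow c u"
    obtain x where x: "x \<in> c" using cells_ok c by blast
    from Flow c c' obtain \<epsilon>::real where "\<epsilon> > 0" "\<forall>x\<in>c. measure (T x u) c' \<ge> \<epsilon>" "c' \<in> cells" by blast
    then have "measure (T x u) c' > 0" using x by force
    then show "c' \<in> Fup c u" using Fup c \<open>c' \<in> cells\<close> x by blast
  qed
  have Fne: "Fup c u \<noteq> {}" if c: "c \<in> cells" for c u
  proof
    assume e: "Fup c u = {}"
    obtain x where x: "x \<in> c" using cells_ok c by blast
    have "emeasure (T x u) (\<Union>{}) = 1" by (rule L[OF c x]) (use e in auto)
    then show False by simp
  qed
  have finF: "finite (Fup c u)" if "c \<in> cells" for c u using finite_subset[OF FupS[OF that] cells_fin] .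
  have Vr_fin: "finite (Vr_of (Flow c u) (Fup c u))" if "c \<in> cells" for c u
    by (rule finite_subset[of _ "Pow (Fup c u)"]) (use finF[OF that] in \<open>auto simp: Vr_of_def\<close>)
  have Vr_mem: "insert c' (Flow c u) \<in> Vr_of (Flow c u) (Fup c u)"
    if c: "c \<in> cells" and c': "c' \<in> Fup c u" for c u c'
  proof -
    have fl: "finite (Flow c u)" using finite_subset[OF FlowFup[OF c] finF[OF c]] .
    have "card (insert c' (Flow c u)) \<le> card (Flow c u) + 1" using fl by (simp add: card_insert_if)
    moreover have "1 \<le> card (insert c' (Flow c u))" using fl by (simp add: Suc_le_eq card_gt_0_iff)
    ultimately show ?thesis using FlowFup[OF c] c' unfolding Vr_of_def by auto
  qed
  have Vr_sub: "r \<noteq> {} \<and> r \<subseteq> cells \<and> finite r"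
    if c: "c \<in> cells" and r: "r \<in> Vr_of (Flow c u) (Fup c u)" for c u r
  proof -
    have "r \<subseteq> cells" using r FupS[OF c] unfolding Vr_of_def by blast
    moreover have "1 \<le> card r" using r unfolding Vr_of_def by blast
    ultimately show ?thesis using finite_subset[OF _ cells_fin] by (metis card.empty not_one_le_zero)
  qed
  have Vr_ne: "Vr_of (Flow c u) (Fup c u) \<noteq> {}" if c: "c \<in> cells" for c u
    using Vr_mem[OF c] Fne[OF c] by blast
  define pi1f where "pi1f = (\<lambda>x::('s set, 'u) gvertex. case x of
      GV1 c u \<Rightarrow> pmf_of_set (GVr ` Vr_of (Flow c u) (Fup c u)) | _ \<Rightarrow> return_pmf x)"
  define \<pi>1 where "\<pi>1 = (\<lambda>h. pi1f (last h))"
  have \<pi>1_in: "\<pi>1 \<in> player1_strategies cells Flow Fup"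
    unfolding player1_strategies_def
  proof (intro CollectI allI impI)
    fix h assume h: "h \<noteq> [] \<and> set h \<subseteq> game_vertices cells Flow Fup \<and> is_GV1 (last h)"
    then obtain c u where lh: "last h = GV1 c u" unfolding is_GV1_def by blast
    have "last h \<in> game_vertices cells Flow Fup" using h last_in_set by blast
    then have c: "c \<in> cells" unfolding lh game_vertices_def by auto
    have "set_pmf (\<pi>1 h) = GVr ` Vr_of (Flow c u) (Fup c u)"
      unfolding \<pi>1_def pi1f_def lh using Vr_fin[OF c] Vr_ne[OF c] by simp
    then show "set_pmf (\<pi>1 h) \<subseteq> game_succ Flow Fup (last h)" unfolding lh by simp
  qed
  define K where "K = (\<lambda>x. game_trans \<sigma> \<pi>1 [x])"
  have GT: "\<And>h. h \<noteq> [] \<Longrightarrow> game_trans \<sigma> \<pi>1 h = K (last h)"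
    unfolding K_def game_trans_def \<pi>1_def by (simp split: gvertex.split)
  have K0: "K (GV0 c) = return_pmf (GV1 c (\<sigma> c))" for c unfolding K_def game_trans_def by simp
  have K1: "K (GV1 c u) = pmf_of_set (GVr ` Vr_of (Flow c u) (Fup c u))" for c u
    unfolding K_def game_trans_def \<pi>1_def pi1f_def by simp
  have Kr: "K (GVr r) = pmf_of_set (GV0 ` r)" for r unfolding K_def game_trans_def by simp
  define V :: "('s set, 'u) gvertex set" where "V = GV0 ` cells \<union> (\<lambda>(c,u). GV1 c u) ` (cells \<times> UNIV) \<union> GVr ` (Pow cells - {{}})"
  have Vfin: "finite V" unfolding V_def using cells_fin by (auto intro!: finite_imageI finite_cartesian_product)
  have KV: "set_pmf (K x) \<subseteq> V" if x: "x \<in> V" for x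
  proof -
    have "x \<in> GV0 ` cells \<or> x \<in> (\<lambda>(c,u). GV1 c u) ` (cells \<times> UNIV) \<or> x \<in> GVr ` (Pow cells - {{}})"
      using x unfolding V_def by (simp only: Un_iff disj_assoc)
    then consider (a) c where "c \<in> cells" "x = GV0 c" | (b) c u where "c \<in> cells" "x = GV1 c u"
      | (r) r where "r \<in> Pow cells - {{}}" "x = GVr r"
      by (elim disjE imageE) auto
    then show ?thesis
    proof cases
      case a
      have "GV1 c (\<sigma> c) \<in> (\<lambda>(c,u). GV1 c u) ` (cells \<times> UNIV)" using a(1) by force
      then show ?thesis unfolding a(2) K0 V_def by simp
    next
      case b
      have "set_pmf (K x) = GVr ` Vr_of (Flow c u) (Fup c u)"
        unfolding b(2) K1 using Vr_fin[OF b(1)] Vr_ne[OF b(1)] by simp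
      moreover have "Vr_of (Flow c u) (Fup c u) \<subseteq> Pow cells - {{}}"
      proof
        fix r assume "r \<in> Vr_of (Flow c u) (Fup c u)"
        from Vr_sub[OF b(1) this] show "r \<in> Pow cells - {{}}" by simp
      qed
      ultimately have "set_pmf (K x) \<subseteq> GVr ` (Pow cells - {{}})" by (simp add: image_mono)
      then show ?thesis unfolding V_def by (rule subset_trans) (rule Un_upper2)
    next
      case r
      have rc: "r \<subseteq> cells" and rne: "r \<noteq> {}" using r(1) by simp_all
      have fr: "finite r" by (rule finite_subset[OF rc cells_fin])
      have "set_pmf (K x) = GV0 ` r" unfolding r(2) Kr using fr rne by simp
      also have "\<dots> \<subseteq> GV0 ` cells" using rc by (rule image_mono)
      finally show ?thesis unfolding V_def by (rule subset_trans) (intro subset_trans[OF Un_upper1 Un_upper1])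
    qed
  qed
  have vc: "v \<in> cells" using v_in U_sub by blast
  have vV: "GV0 v \<in> V" unfolding V_def using vc by blast
  obtain Pg where Pg: "prob_space Pg" "sets Pg = sets (stream_space (count_space UNIV))"
    "\<forall>w. emeasure Pg {\<omega> \<in> space Pg. stake (Suc (length w)) \<omega> = GV0 v # w} = ennreal (prodK K (GV0 v) w)"
    using mc_exists[where K=K and V=V and x="GV0 v", OF Vfin KV vV] by blast
  have prodeq: "(\<Prod>i<length w. pmf (game_trans \<sigma> \<pi>1 (take (Suc i) (GV0 v # w))) (w ! i)) = prodK K (GV0 v) w" for w
    by (rule prod_prodK) (rule GT)
  have "is_game_measure \<sigma> \<pi>1 (GV0 v) Pg"
    unfolding is_game_measure_def using Pg prodeq by simp
  then have isg: "is_game_measure \<sigma> \<pi>1 (GV0 v) (game_measure \<sigma> \<pi>1 (GV0 v))"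
    unfolding game_measure_def by (rule someI)
  define G where "G = game_measure \<sigma> \<pi>1 (GV0 v)"
  have geq: "emeasure G (game_always U) \<ge> 1"
    using win INF_lower[OF \<pi>1_in, of "\<lambda>\<pi>1. emeasure (game_measure \<sigma> \<pi>1 (GV0 v)) (game_always U)"]
    unfolding G_def by simp
  define R where "R = {(c, c'). c \<in> cells \<and> c' \<in> Fup c (\<sigma> c)}"
  have reach: "\<exists>w. posK K (GV0 v) w \<and> last (GV0 v # w) = GV0 c" if "(v, c) \<in> R\<^sup>*" for c
    using that
  proof (induction rule: rtrancl_induct)
    case base
    then show ?case by (rule exI[of _ "[]"]) simp
  next
    case (step c c')
    then obtain w where w: "posK K (GV0 v) w" "last (GV0 v # w) = GV0 c" by blast
    have c: "c \<in> cells" and c': "c' \<in> Fup c (\<sigma> c)" using step(2) unfolding R_def by auto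
    let ?r = "insert c' (Flow c (\<sigma> c))"
    have r: "?r \<in> Vr_of (Flow c (\<sigma> c)) (Fup c (\<sigma> c))" by (rule Vr_mem[OF c c'])
    have fr: "finite ?r" using Vr_sub[OF c r] by (elim conjE)
    have m1: "GV1 c (\<sigma> c) \<in> set_pmf (K (GV0 c))" unfolding K0 by simp
    have "set_pmf (K (GV1 c (\<sigma> c))) = GVr ` Vr_of (Flow c (\<sigma> c)) (Fup c (\<sigma> c))"
      unfolding K1 using Vr_fin[OF c] Vr_ne[OF c] by (intro set_pmf_of_set finite_imageI) auto
    then have m2: "GVr ?r \<in> set_pmf (K (GV1 c (\<sigma> c)))" using r by (simp only: image_eqI)
    have "set_pmf (K (GVr ?r)) = GV0 ` ?r"
      unfolding Kr using fr by (intro set_pmf_of_set finite_imageI) auto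
    then have m3: "GV0 c' \<in> set_pmf (K (GVr ?r))" by simp
    have p3: "posK K (GV0 c) [GV1 c (\<sigma> c), GVr ?r, GV0 c']"
      using m1 m2 m3 by (simp only: posK.simps simp_thms)
    have "posK K (GV0 v) (w @ [GV1 c (\<sigma> c), GVr ?r, GV0 c'])"
      unfolding posK_append using w p3 by simp
    moreover have "last (GV0 v # w @ [GV1 c (\<sigma> c), GVr ?r, GV0 c']) = GV0 c'" by simp
    ultimately show ?case by blast
  qed
  have WU: "c \<in> U" if r: "(v, c) \<in> R\<^sup>*" for c
  proof (rule ccontr)
    assume nU: "c \<notin> U"
    obtain w where pw: "posK K (GV0 v) w" and lw: "last (GV0 v # w) = GV0 c" using reach[OF r] by blast
    have sG: "sets G = sets (stream_space (count_space UNIV))" and pG: "prob_space G"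
      and cylG: "\<And>w. emeasure G {\<omega> \<in> space G. stake (Suc (length w)) \<omega> = GV0 v # w} =
           ennreal (\<Prod>i<length w. pmf (game_trans \<sigma> \<pi>1 (take (Suc i) (GV0 v # w))) (w ! i))"
      using isg unfolding G_def is_game_measure_def by blast+
    interpret G: prob_space G by (rule pG)
    have spG: "space G = space (stream_space (count_space UNIV))" by (rule sets_eq_imp_space_eq[OF sG])
    let ?C = "{\<omega> \<in> space G. stake (Suc (length w)) \<omega> = GV0 v # w}"
    have Cs: "?C \<in> sets G" unfolding sG spG by (rule sets_cyl)
    have "emeasure G ?C = ennreal (prodK K (GV0 v) w)" using cylG prodeq by simp
    then have Cpos: "G.prob ?C > 0" using prodK_pos[OF pw] by (simp add: G.emeasure_eq_measure prodK_nonneg)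
    have As: "game_always U \<in> sets G"
    proof -
      have "Measurable.pred (stream_space (count_space UNIV))
          (\<lambda>\<omega>. \<forall>i. case \<omega> !! i of GV0 c \<Rightarrow> c \<in> U | _ \<Rightarrow> True)"
        by (intro pred_intros_countable) (auto intro!: measurable_compose[OF measurable_snth])
      then have "{\<omega> \<in> space (stream_space (count_space UNIV)). \<forall>i. case \<omega> !! i of GV0 c \<Rightarrow> c \<in> U | _ \<Rightarrow> True}
           \<in> sets (stream_space (count_space UNIV))" by (rule predE)
      then show ?thesis unfolding sG game_always_def by (simp add: space_stream_space)
    qed
    have disj: "game_always U \<inter> ?C = {}"
    proof (intro equals0I)
      fix \<omega> assume "\<omega> \<in> game_always U \<inter> ?C"
      then have a: "\<omega> \<in> game_always U" and st: "stake (Suc (length w)) \<omega> = GV0 v # w" by auto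
      have "\<omega> !! length w = stake (Suc (length w)) \<omega> ! length w" by (rule stake_nth[symmetric]) simp
      also have "\<dots> = last (GV0 v # w)" unfolding st by (simp add: last_conv_nth)
      finally have "\<omega> !! length w = GV0 c" using lw by simp
      moreover have "case \<omega> !! length w of GV0 c \<Rightarrow> c \<in> U | _ \<Rightarrow> True"
        using a unfolding game_always_def by blast
      ultimately show False using nU by simp
    qed
    have "G.prob (game_always U) \<ge> 1" using geq by (simp add: G.emeasure_eq_measure)
    moreover have "G.prob (game_always U \<union> ?C) = G.prob (game_always U) + G.prob ?C"
      by (rule G.finite_measure_Union[OF As Cs disj])
    moreover have "G.prob (game_always U \<union> ?C) \<le> 1" by (rule G.prob_le_1)
    ultimately show False using Cpos by linarith
  qed
  define Wc where "Wc = {c. (v, c) \<in> R\<^sup>*}"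
  have Wc_cells: "Wc \<subseteq> cells"
  proof
    fix c assume "c \<in> Wc"
    then have "(v, c) \<in> R\<^sup>*" unfolding Wc_def by simp
    then show "c \<in> cells"
      by (induction rule: rtrancl_induct) (use vc FupS in \<open>auto simp: R_def\<close>)
  qed
  have Wc_cl: "Fup c (\<sigma> c) \<subseteq> Wc" if "c \<in> Wc" for c
    using that Wc_cells unfolding Wc_def R_def by (auto intro: rtrancl_into_rtrancl)
  have WcU: "Wc \<subseteq> U" using WU unfolding Wc_def by blast
  have vW: "v \<in> Wc" unfolding Wc_def by simp
  have cell_of_eq: "cell_of cells t = c" if c: "c \<in> cells" and t: "t \<in> c" for c t
    unfolding cell_of_def
  proof (rule the_equality)
    show "c \<in> cells \<and> t \<in> c" using c t by blast
    fix c2 assume "c2 \<in> cells \<and> t \<in> c2"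
    then show "c2 = c" using cells_disj c t unfolding pairwise_def disjnt_def by blast
  qed
  show ?thesis
  proof (intro ballI allI impI)
    fix s P assume s: "s \<in> v" and P: "cmp_path_measure ?M T (refinement cells \<sigma>) s P"
    have fW: "finite Wc" using finite_subset[OF Wc_cells cells_fin] .
    have Ws: "\<Union>Wc \<in> sets ?M" using fW Wc_cells cells_sets by (intro sets.finite_Union) auto
    have AE: "AE \<omega> in P. \<forall>i. \<omega> !! i \<in> \<Union>Wc"
    proof (rule cmp_always[OF P Ws])
      show "s \<in> \<Union>Wc" using s vW by blast
      fix t assume "t \<in> \<Union>Wc"
      then obtain c where cW: "c \<in> Wc" and tc: "t \<in> c" by blast
      have c: "c \<in> cells" using cW Wc_cells by blast
      have tS: "t \<in> S" using c tc cells_cover by blast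
      have "refinement cells \<sigma> t = \<sigma> c" unfolding refinement_def using cell_of_eq[OF c tc] by simp
      then show "emeasure (T t (refinement cells \<sigma> t)) (\<Union>Wc) = 1 \<and> sets (T t (refinement cells \<sigma> t)) = sets ?M"
        using L[OF c tc Wc_cl[OF cW] Wc_cells] Tprob[OF tS] by simp
    qed
    interpret prob_space P using P unfolding cmp_path_measure_def by blast
    have sP: "sets P = sets (stream_space ?M)" using P unfolding cmp_path_measure_def by blast
    have US: "\<Union>U \<in> sets ?M"
      using finite_subset[OF U_sub cells_fin] U_sub cells_sets by (intro sets.finite_Union) auto
    have meas: "Measurable.pred P (\<lambda>\<omega>. \<forall>i. \<omega> !! i \<in> \<Union>U)"
      unfolding measurable_cong_sets[OF sP refl]
      by (rule pred_intros_countable, rule pred_sets2[OF US], rule measurable_snth)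
    have "AE \<omega> in P. \<forall>i. \<omega> !! i \<in> \<Union>U"
      using AE by (rule AE_mp) (use WcU in \<open>blast intro: AE_I2\<close>)
    then show "emeasure P {\<omega> \<in> space P. \<forall>i. \<omega> !! i \<in> \<Union>U} = 1"
      using AE_iff_emeasure_eq_1[OF meas] by simp
  qed
qed

end
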